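(* Let $j\in\mathbb N$, let $J:(0,1]\to(0,\infty)$ be measurable with $\inf_{t\in(0,1]}J(t)/t>0$, and let $\|\cdot\|_{X(0,1)}$ be a rearrangement-invariant norm. (a) If $\int_0^1\frac{dr}{J(r)}<\infty$, then $\lim_{a\to0_+}\sup_{\|f\|_{L^\infty(0,1)}\le1}\|H^j_J(\chi_{(0,a)}f)\|_{X(0,1)}=0$ holds for all $j\in\mathbb N$ and all rearrangement-invariant norms $\|\cdot\|_{X(0,1)}$. If $\int_0^1\frac{dr}{J(r)}=\infty$, this condition holds if and only if $\lim_{a\to0_+}\big\|\chi_{(0,a)}(t)\big(\int_t^1\frac{dr}{J(r)}\big)^j\big\|_{X(0,1)}=0$. (b) $\lim_{a\to0_+}\sup_{\|f\|_{X(0,1)}\le1}\|H^j_J(\chi_{(0,a)}f)\|_{L^\infty(0,1)}=0$ holds if and only if $\lim_{a\to0_+}\Big\|\frac{\chi_{(0,a)}(t)}{J(t)}\big(\int_0^t\frac{dr}{J(r)}\big)^{j-1}\Big\|_{X'(0,1)}=0$. This is never the case when $\int_0^1\frac{dr}{J(r)}=\infty$.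
   Context: A rearrangement-invariant (r.i.) norm on $(0,1)$ is a functional $\|\cdot\|_{X(0,1)}$ on measurable functions with values in $[0,\infty]$ satisfying: for $f,g\ge0$, $a\ge0$, $\|f\|=0$ iff $f=0$ a.e., $\|af\|=a\|f\|$, $\|f+g\|\le\|f\|+\|g\|$; $f\le g$ a.e. $\Rightarrow\|f\|\le\|g\|$; $0\le f_k\uparrow f$ a.e. $\Rightarrow\|f_k\|\uparrow\|f\|$; $\|1\|<\infty$; $\int_0^1f\le C\|f\|$; equimeasurable functions have equal norm. Associate norm: $\|f\|_{X'(0,1)}=\sup_{\|g\|_{X(0,1)}\le1}\int_0^1|fg|$. Operator: $H^j_Jf(t)=\frac{1}{(j-1)!}\int_t^1\frac{|f(s)|}{J(s)}\big(\int_t^s\frac{dr}{J(r)}\big)^{j-1}ds$, $t\in(0,1)$. *)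

theory Defs
  imports "HOL-Analysis.Analysis"
begin

definition M01 :: "real measure" where
  "M01 = restrict_space lebesgue {0<..<1}"

text \<open>A rearrangement-invariant norm, given by its values on nonnegative
  (possibly infinite-valued) measurable functions on (0,1); the norm of a real
  function f is rho applied to the absolute value of f.\<close>
definition ri_norm :: "((real \<Rightarrow> ennreal) \<Rightarrow> ennreal) \<Rightarrow> bool" where
  "ri_norm \<rho> \<longleftrightarrow>
     (\<forall>f \<in> borel_measurable M01. \<rho> f = 0 \<longleftrightarrow> (AE t in M01. f t = 0)) \<and>
     (\<forall>f \<in> borel_measurable M01. \<forall>a::real. a \<ge> 0 \<longrightarrow>
         \<rho> (\<lambda>t. ennreal a * f t) = ennreal a * \<rho> f) \<and>
     (\<forall>f \<in> borel_measurable M01. \<forall>g \<in> borel_measurable M01.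
         \<rho> (\<lambda>t. f t + g t) \<le> \<rho> f + \<rho> g) \<and>
     (\<forall>f \<in> borel_measurable M01. \<forall>g \<in> borel_measurable M01.
         (AE t in M01. f t \<le> g t) \<longrightarrow> \<rho> f \<le> \<rho> g) \<and>
     (\<forall>fk f. (\<forall>k. fk k \<in> borel_measurable M01) \<longrightarrow> f \<in> borel_measurable M01 \<longrightarrow>
         (AE t in M01. incseq (\<lambda>k. fk k t) \<and> (\<lambda>k. fk k t) \<longlonglongrightarrow> f t) \<longrightarrow>
         (\<lambda>k. \<rho> (fk k)) \<longlonglongrightarrow> \<rho> f) \<and>
     \<rho> (\<lambda>_. 1) < \<infinity> \<and>
     (\<exists>C::real. \<forall>f \<in> borel_measurable M01. (\<integral>\<^sup>+ t. f t \<partial>M01) \<le> ennreal C * \<rho> f) \<and>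
     (\<forall>f \<in> borel_measurable M01. \<forall>g \<in> borel_measurable M01.
         (\<forall>y::ennreal. emeasure M01 {t \<in> space M01. y < f t}
                       = emeasure M01 {t \<in> space M01. y < g t}) \<longrightarrow> \<rho> f = \<rho> g)"

definition assoc_norm :: "((real \<Rightarrow> ennreal) \<Rightarrow> ennreal) \<Rightarrow> (real \<Rightarrow> ennreal) \<Rightarrow> ennreal" where
  "assoc_norm \<rho> f = (SUP g \<in> {g \<in> borel_measurable M01. \<rho> g \<le> 1}. \<integral>\<^sup>+ t. f t * g t \<partial>M01)"

definition Linf :: "(real \<Rightarrow> ennreal) \<Rightarrow> ennreal" where
  "Linf g = Inf {c. AE t in M01. g t \<le> c}"

definition Hop :: "nat \<Rightarrow> (real \<Rightarrow> real) \<Rightarrow> (real \<Rightarrow> real) \<Rightarrow> real \<Rightarrow> ennreal" where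
  "Hop j J f t = ennreal (1 / fact (j - 1)) *
     (\<integral>\<^sup>+ s \<in> {t<..<1}. ennreal (\<bar>f s\<bar> / J s) *
         (\<integral>\<^sup>+ r \<in> {t<..<s}. ennreal (1 / J r) \<partial>lebesgue) ^ (j - 1) \<partial>lebesgue)"

end

theory Submission
  imports Defs
begin


lemma borel_to_lebesgue: "f \<in> borel_measurable borel \<Longrightarrow> f \<in> borel_measurable lebesgue"
  by (metis measurable_lborel2 measurable_completion)

lemma antitone_measurable:
  fixes \<phi> :: "real \<Rightarrow> ennreal"
  assumes "\<And>x y. x \<le> y \<Longrightarrow> \<phi> y \<le> \<phi> x"
  shows "\<phi> \<in> borel_measurable borel"
proof (rule borel_measurableI_greater)
  fix y
  have "is_interval {x. y < \<phi> x}"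
    unfolding is_interval_1 using assms by (auto intro: less_le_trans)
  then show "{x \<in> space borel. y < \<phi> x} \<in> sets borel"
    using real_interval_borel_measurable by simp
qed

lemma mono_measurable:
  fixes \<phi> :: "real \<Rightarrow> ennreal"
  assumes "\<And>x y. x \<le> y \<Longrightarrow> \<phi> x \<le> \<phi> y"
  shows "\<phi> \<in> borel_measurable borel"
proof (rule borel_measurableI_greater)
  fix y
  have "is_interval {x. y < \<phi> x}"
    unfolding is_interval_1 using assms by (auto intro: less_le_trans)
  then show "{x \<in> space borel. y < \<phi> x} \<in> sets borel"
    using real_interval_borel_measurable by simp
qed

lemma SUP_power_ennreal:
  fixes x :: "nat \<Rightarrow> ennreal"
  assumes "incseq x"
  shows "(SUP n. x n) ^ k = (SUP n. x n ^ k)"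
proof (induction k)
  case 0 then show ?case by simp
next
  case (Suc k)
  have "(SUP n. x n) ^ Suc k = (SUP n. x n) * (SUP m. x m ^ k)" using Suc by simp
  also have "\<dots> = (SUP n. SUP m. x n * x m ^ k)"
    by (simp add: SUP_mult_left_ennreal SUP_mult_right_ennreal, subst SUP_commute, rule refl)
  also have "\<dots> = (SUP n. x n ^ Suc k)"
  proof (rule antisym)
    show "(SUP n. SUP m. x n * x m ^ k) \<le> (SUP n. x n ^ Suc k)"
    proof (intro SUP_least)
      fix n m
      have "x n * x m ^ k \<le> x (max n m) * x (max n m) ^ k"
        using assms by (intro mult_mono power_mono_ennreal) (auto simp: incseq_def)
      also have "\<dots> \<le> (SUP n. x n ^ Suc k)" by (intro SUP_upper2[of "max n m"]) auto
      finally show "x n * x m ^ k \<le> (SUP n. x n ^ Suc k)" .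
    qed
    show "(SUP n. x n ^ Suc k) \<le> (SUP n. SUP m. x n * x m ^ k)"
      by (intro SUP_least SUP_upper2[of n] SUP_upper2) (auto)
  qed
  finally show ?case .
qed

lemma inv2: "inverse 2 + inverse 2 = (1::ennreal)"
proof -
  have "ennreal (1/2) + ennreal (1/2) = ennreal (1/2 + 1/2)" by (subst ennreal_plus) auto
  then show ?thesis by simp
qed
lemma half_add: "x / 2 + x / 2 = (x::ennreal)"
  unfolding divide_ennreal_def by (simp add: distrib_left[symmetric] inv2)
lemma four_half: "4 * (x / 2) = 2 * (x::ennreal)"
proof -
  have "ennreal 4 * ennreal (1/2) = ennreal 2" by (subst ennreal_mult[symmetric]) auto
  then have "4 * inverse 2 = (2::ennreal)" by simp
  then show ?thesis unfolding divide_ennreal_def by (metis mult.assoc mult.commute)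
qed

lemma space_M01[simp]: "space M01 = {0<..<1}"
  by (simp add: M01_def)

lemma M01_set[simp]: "{0<..<1::real} \<inter> space lebesgue \<in> sets lebesgue" by simp

lemma AE_M01: "(AE x in M01. P x) \<longleftrightarrow> (AE x in lebesgue. x \<in> {0<..<1} \<longrightarrow> P x)"
  unfolding M01_def by (rule AE_restrict_space_iff) simp

lemma meas_M01: "f \<in> borel_measurable borel \<Longrightarrow> f \<in> borel_measurable M01"
  unfolding M01_def by (intro measurable_restrict_space1 borel_to_lebesgue)

lemma meas_M01_cong: "(\<And>t. t \<in> {0<..<1} \<Longrightarrow> f t = g t) \<Longrightarrow> g \<in> borel_measurable borel \<Longrightarrow> f \<in> borel_measurable M01"
  by (subst measurable_cong[where g=g]) (auto simp: M01_def intro: meas_M01[unfolded M01_def])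

context
  fixes \<rho> :: "(real \<Rightarrow> ennreal) \<Rightarrow> ennreal"
  assumes X: "ri_norm \<rho>"
begin

lemma rho_hom: "f \<in> borel_measurable M01 \<Longrightarrow> 0 \<le> a \<Longrightarrow> \<rho> (\<lambda>t. ennreal a * f t) = ennreal a * \<rho> f"
  using X unfolding ri_norm_def by blast

lemma rho_mono: "f \<in> borel_measurable M01 \<Longrightarrow> g \<in> borel_measurable M01 \<Longrightarrow>
    (\<And>t. t \<in> {0<..<1} \<Longrightarrow> f t \<le> g t) \<Longrightarrow> \<rho> f \<le> \<rho> g"
proof -
  assume f: "f \<in> borel_measurable M01" and g: "g \<in> borel_measurable M01"
    and le: "\<And>t. t \<in> {0<..<1} \<Longrightarrow> f t \<le> g t"
  have "AE t in M01. f t \<le> g t" by (rule AE_I2) (use le in simp)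
  then show ?thesis using X f g unfolding ri_norm_def by blast
qed

lemma rho_one: "\<rho> (\<lambda>_. 1) < \<infinity>"
  using X unfolding ri_norm_def by blast

lemma rho_one_pos: "\<rho> (\<lambda>_. 1) \<noteq> 0"
proof
  assume "\<rho> (\<lambda>_. 1) = 0"
  moreover have z: "\<forall>f\<in>borel_measurable M01. (\<rho> f = 0) = (AE t in M01. f t = 0)"
    using X unfolding ri_norm_def by blast
  ultimately have "AE t in M01. False"
    using z[rule_format, OF borel_measurable_const[of "1::ennreal"]] by simp
  then have "emeasure M01 (space M01) = 0" by (metis ae_filter_eq_bot_iff trivial_limit_def)
  moreover have "emeasure M01 (space M01) = 1" unfolding space_M01 M01_def
    by (subst emeasure_restrict_space) auto
  ultimately show False by simp
qed

lemma rho_const: "0 \<le> c \<Longrightarrow> \<rho> (\<lambda>_. ennreal c) = ennreal c * \<rho> (\<lambda>_. 1)"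
  using rho_hom[of "\<lambda>_. 1" c] by simp

lemma rho_int: "\<exists>C::real. \<forall>f \<in> borel_measurable M01. (\<integral>\<^sup>+ t. f t \<partial>M01) \<le> ennreal C * \<rho> f"
  using X unfolding ri_norm_def by blast

lemma assoc_eq:
  "(SUP f\<in>{f \<in> borel_measurable M01. \<rho> (\<lambda>t. ennreal \<bar>f t\<bar>) \<le> 1}. \<integral>\<^sup>+ t. ennreal \<bar>f t\<bar> * ga t \<partial>M01)
    = assoc_norm \<rho> ga"
  unfolding assoc_norm_def
proof (rule antisym)
  show "(SUP f\<in>{f \<in> borel_measurable M01. \<rho> (\<lambda>t. ennreal \<bar>f t\<bar>) \<le> 1}. \<integral>\<^sup>+ t. ennreal \<bar>f t\<bar> * ga t \<partial>M01)
    \<le> (SUP g\<in>{g \<in> borel_measurable M01. \<rho> g \<le> 1}. \<integral>\<^sup>+ t. ga t * g t \<partial>M01)"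
  proof (intro SUP_least)
    fix f assume f: "f \<in> {f \<in> borel_measurable M01. \<rho> (\<lambda>t. ennreal \<bar>f t\<bar>) \<le> 1}"
    then have "(\<lambda>t. ennreal \<bar>f t\<bar>) \<in> {g \<in> borel_measurable M01. \<rho> g \<le> 1}" by auto
    then have "(\<integral>\<^sup>+ t. ga t * ennreal \<bar>f t\<bar> \<partial>M01) \<le> (SUP g\<in>{g \<in> borel_measurable M01. \<rho> g \<le> 1}. \<integral>\<^sup>+ t. ga t * g t \<partial>M01)"
      by (rule SUP_upper2) simp
    then show "(\<integral>\<^sup>+ t. ennreal \<bar>f t\<bar> * ga t \<partial>M01) \<le> (SUP g\<in>{g \<in> borel_measurable M01. \<rho> g \<le> 1}. \<integral>\<^sup>+ t. ga t * g t \<partial>M01)"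
      by (simp add: mult.commute)
  qed
  show "(SUP g\<in>{g \<in> borel_measurable M01. \<rho> g \<le> 1}. \<integral>\<^sup>+ t. ga t * g t \<partial>M01)
    \<le> (SUP f\<in>{f \<in> borel_measurable M01. \<rho> (\<lambda>t. ennreal \<bar>f t\<bar>) \<le> 1}. \<integral>\<^sup>+ t. ennreal \<bar>f t\<bar> * ga t \<partial>M01)"
  proof (intro SUP_least)
    fix g assume g: "g \<in> {g \<in> borel_measurable M01. \<rho> g \<le> 1}"
    then have gm: "g \<in> borel_measurable M01" and g1: "\<rho> g \<le> 1" by auto
    define f where "f t = enn2real (g t)" for t
    have fm: "f \<in> borel_measurable M01" unfolding f_def using gm by measurable
    have le: "ennreal \<bar>f t\<bar> \<le> g t" for t
      unfolding f_def by (cases "g t = \<infinity>") (auto simp: top.not_eq_extremum)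
    have "\<rho> (\<lambda>t. ennreal \<bar>f t\<bar>) \<le> \<rho> g"
      using le fm gm by (intro rho_mono) auto
    then have fin: "f \<in> {f \<in> borel_measurable M01. \<rho> (\<lambda>t. ennreal \<bar>f t\<bar>) \<le> 1}" using fm g1 by auto
    obtain C where C: "\<forall>f \<in> borel_measurable M01. (\<integral>\<^sup>+ t. f t \<partial>M01) \<le> ennreal C * \<rho> f"
      using rho_int by blast
    have "(\<integral>\<^sup>+ t. g t \<partial>M01) \<le> ennreal C * \<rho> g" using C gm by blast
    also have "\<dots> \<le> ennreal C * 1" using g1 by (rule mult_left_mono) simp
    finally have "(\<integral>\<^sup>+ t. g t \<partial>M01) \<noteq> \<infinity>" by (auto simp: top_unique)
    then have ae: "AE t in M01. g t \<noteq> \<infinity>" using gm by (intro nn_integral_PInf_AE) auto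
    have "(\<integral>\<^sup>+ t. ga t * g t \<partial>M01) = (\<integral>\<^sup>+ t. ennreal \<bar>f t\<bar> * ga t \<partial>M01)"
      using ae by (intro nn_integral_cong_AE) (auto elim!: eventually_mono simp: f_def mult.commute top.not_eq_extremum)
    also have "\<dots> \<le> (SUP f\<in>{f \<in> borel_measurable M01. \<rho> (\<lambda>t. ennreal \<bar>f t\<bar>) \<le> 1}. \<integral>\<^sup>+ t. ennreal \<bar>f t\<bar> * ga t \<partial>M01)"
      using fin by (rule SUP_upper)
    finally show "(\<integral>\<^sup>+ t. ga t * g t \<partial>M01) \<le> \<dots>" .
  qed
qed

end

lemma Linf_le1:
  assumes "Linf g \<le> 1"
  shows "AE x in M01. g x \<le> 1"
proof -
  have "\<forall>n::nat. \<exists>c. (AE x in M01. g x \<le> c) \<and> c < 1 + ennreal (1 / Suc n)"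
  proof
    fix n :: nat
    have "Linf g < 1 + ennreal (1 / Suc n)"
      using assms by (rule le_less_trans) (simp add: ennreal_zero_less_divide)
    then show "\<exists>c. (AE x in M01. g x \<le> c) \<and> c < 1 + ennreal (1 / Suc n)"
      unfolding Linf_def by (simp add: Inf_less_iff)
  qed
  then have "\<forall>n::nat. AE x in M01. g x \<le> 1 + ennreal (1 / Suc n)"
  proof (intro allI)
    fix n :: nat
    assume "\<forall>n::nat. \<exists>c. (AE x in M01. g x \<le> c) \<and> c < 1 + ennreal (1 / Suc n)"
    then obtain c where c1: "AE x in M01. g x \<le> c" and c2: "c < 1 + ennreal (1 / Suc n)" by blast
    show "AE x in M01. g x \<le> 1 + ennreal (1 / Suc n)"
      using c1 by (rule eventually_mono) (use c2 in auto)
  qed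
  then have "AE x in M01. \<forall>n::nat. g x \<le> 1 + ennreal (1 / Suc n)"
    by (simp add: AE_all_countable)
  then show ?thesis
  proof (eventually_elim)
    fix x assume x: "\<forall>n::nat. g x \<le> 1 + ennreal (1 / Suc n)"
    show "g x \<le> 1"
    proof (rule ennreal_le_epsilon)
      fix e :: real assume e: "0 < e"
      obtain n :: nat where n: "1 / e < n" using reals_Archimedean2 by blast
      have "1 / e < real (Suc n)" using n by simp
      then have "1 < e * real (Suc n)" using e by (simp add: field_simps)
      then have "1 / real (Suc n) \<le> e" by (simp add: field_simps)
      then have "g x \<le> 1 + ennreal e" using x
        by (meson add_left_mono ennreal_leI order_trans)
      then show "g x \<le> 1 + ennreal e" .
    qed
  qed
qed

lemma Linf_const: "Linf (\<lambda>_. 1) \<le> 1"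
  unfolding Linf_def by (rule Inf_lower) simp

lemma Linf_antitone:
  assumes anti: "\<And>x y. 0 < x \<Longrightarrow> x \<le> y \<Longrightarrow> y < 1 \<Longrightarrow> \<phi> y \<le> \<phi> x"
  shows "Linf \<phi> = (SUP t \<in> {0<..<1}. \<phi> t)"
proof (rule antisym)
  show "Linf \<phi> \<le> (SUP t \<in> {0<..<1}. \<phi> t)"
    unfolding Linf_def
    by (rule Inf_lower) (auto simp: AE_M01 intro!: AE_I2 SUP_upper)
  show "(SUP t \<in> {0<..<1}. \<phi> t) \<le> Linf \<phi>"
    unfolding Linf_def
  proof (intro SUP_least Inf_greatest)
    fix t c assume t: "t \<in> {0<..<1::real}" and c: "c \<in> {c. AE t in M01. \<phi> t \<le> c}"
    show "\<phi> t \<le> c"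
    proof (rule ccontr)
      assume "\<not> \<phi> t \<le> c"
      then have "\<forall>x\<in>{0<..t}. \<not> \<phi> x \<le> c"
        using anti t by (meson greaterThanAtMost_iff greaterThanLessThan_iff not_le order_less_le_trans)
      note bad = this
      have "AE x in lebesgue. x \<in> {0<..<1} \<longrightarrow> \<phi> x \<le> c"
        using c unfolding AE_M01 by simp
      then have "AE x in lebesgue. x \<notin> {0<..<t}"
        by (rule eventually_mono) (use t bad in auto)
      then have "{0<..<t} \<in> null_sets lebesgue"
        by (subst AE_iff_null_sets) auto
      then show False using t by (auto simp: null_sets_def)
    qed
  qed
qed

definition hh :: "(real \<Rightarrow> real) \<Rightarrow> real \<Rightarrow> ennreal" where
  "hh J r = indicator {0<..<1} r * ennreal (1 / J r)"

definition GG :: "(real \<Rightarrow> real) \<Rightarrow> real \<Rightarrow> real \<Rightarrow> ennreal" where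
  "GG J t s = emeasure (density lebesgue (hh J)) {t<..<s}"

context
  fixes J :: "real \<Rightarrow> real"
  assumes Jmeas: "J \<in> borel_measurable (restrict_space lebesgue {0<..1})"
    and Jpos: "\<forall>t \<in> {0<..1}. J t > 0"
    and Jinf: "(INF t \<in> {0<..1}. J t / t) > 0"
begin

lemma hh_meas[measurable]: "hh J \<in> borel_measurable lebesgue"
proof -
  have "(\<lambda>r. ennreal (1 / J r)) \<in> borel_measurable (restrict_space lebesgue {0<..1})"
    using Jmeas by measurable
  then have "(\<lambda>r. ennreal (1 / J r)) \<in> borel_measurable (restrict_space lebesgue {0<..<1})"
    by (rule measurable_restrict_mono) auto
  then have "(\<lambda>r. ennreal (1 / J r) * indicator {0<..<1} r) \<in> borel_measurable lebesgue"
    by (subst (asm) borel_measurable_restrict_space_iff_ennreal) auto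
  then show ?thesis unfolding hh_def by (simp add: mult.commute)
qed

lemma sets_N[simp]: "sets (density lebesgue (hh J)) = sets lebesgue" by simp

lemma G_int: "GG J t s = (\<integral>\<^sup>+ r. hh J r * indicator {t<..<s} r \<partial>lebesgue)"
  unfolding GG_def by (rule emeasure_density) auto

lemma G_mono: "t' \<le> t \<Longrightarrow> s \<le> s' \<Longrightarrow> GG J t s \<le> GG J t' s'"
  unfolding GG_def by (intro emeasure_mono) auto

lemma G_empty: "s \<le> t \<Longrightarrow> GG J t s = 0"
  unfolding GG_def by simp

lemma Jlow: "\<exists>c>0. \<forall>t\<in>{0<..1}. c * t \<le> J t"
proof -
  let ?c = "INF t \<in> {0<..1}. J t / t"
  have bdd: "bdd_below ((\<lambda>t. J t / t) ` {0<..1})"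
    using Jpos by (intro bdd_belowI[of _ 0]) auto
  { fix t :: real assume t: "t \<in> {0<..1}"
    then have "?c \<le> J t / t" by (intro cINF_lower bdd) auto
    then have "?c * t \<le> J t" using t by (simp add: le_divide_eq) }
  then show ?thesis using Jinf by blast
qed

lemma G_fin: "0 < t \<Longrightarrow> GG J t s < \<infinity>"
proof -
  assume t: "0 < t"
  obtain c where c: "c > 0" "\<forall>t\<in>{0<..1}. c * t \<le> J t" using Jlow by blast
  have "GG J t s \<le> (\<integral>\<^sup>+ r. ennreal (1 / (c * t)) * indicator {t<..<1} r \<partial>lebesgue)"
    unfolding G_int
  proof (intro nn_integral_mono)
    fix r
    show "hh J r * indicator {t<..<s} r \<le> ennreal (1 / (c * t)) * indicator {t<..<1} r"
    proof (cases "r \<in> {t<..<s} \<and> r \<in> {0<..<1}")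
      case True
      then have "c * t \<le> c * r" using c t by (intro mult_left_mono) auto
      moreover have "c * r \<le> J r" using c True by auto
      ultimately have ct1: "c * t \<le> J r" by linarith
      have ct2: "0 < c * t" using c t by simp
      note ct = ct1 ct2
      then have "1 / J r \<le> 1 / (c * t)" by (intro divide_left_mono) auto
      then show ?thesis using True unfolding hh_def by (auto intro: ennreal_leI)
    qed (auto simp: hh_def indicator_def)
  qed
  also have "\<dots> = ennreal (1 / (c * t)) * emeasure lebesgue {t<..<1}"
    by (rule nn_integral_cmult_indicator) auto
  also have "\<dots> < \<infinity>"
    by (cases "t \<le> 1") (auto simp: ennreal_mult_less_top)
  finally show ?thesis .
qed

lemma G_add: "t \<le> m \<Longrightarrow> m \<le> s \<Longrightarrow> GG J t s = GG J t m + GG J m s"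
proof (cases "m = s \<or> t = m")
  case True then show ?thesis by (auto simp: G_empty)
next
  case False
  assume tm: "t \<le> m" and ms: "m \<le> s"
  with False have ms: "m < s" and tm: "t < m" by auto
  let ?N = "density lebesgue (hh J)"
  have single: "emeasure ?N {m} = 0"
    by (subst emeasure_density) (auto intro!: nn_integral_null_set)
  have "emeasure ?N {m..<s} = emeasure ?N {m} + emeasure ?N {m<..<s}"
    using ms by (subst plus_emeasure) (auto intro!: arg_cong[where f="emeasure ?N"])
  then have 1: "emeasure ?N {m..<s} = GG J m s" using single by (simp add: GG_def)
  have "GG J t s = emeasure ?N {t<..<m} + emeasure ?N {m..<s}"
    unfolding GG_def using tm ms
    by (subst plus_emeasure) (auto intro!: arg_cong[where f="emeasure ?N"])
  then show ?thesis using 1 by (simp add: GG_def)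
qed

lemma G_left:
  assumes tm: "t < m" and le: "\<And>s. t < s \<Longrightarrow> s < m \<Longrightarrow> GG J t s \<le> y"
  shows "GG J t m \<le> y"
proof -
  let ?N = "density lebesgue (hh J)"
  define A where "A n = {t<..<m - (m - t) / real (n + 2)}" for n :: nat
  have inc: "incseq A"
    unfolding A_def incseq_def
  proof (intro allI impI subsetI)
    fix n n' x assume nn: "n \<le> n'" and x: "x \<in> {t<..< m - (m-t)/real(n+2)}"
    have "(m-t)/real(n'+2) \<le> (m-t)/real(n+2)" using tm nn by (intro divide_left_mono) auto
    with x show "x \<in> {t<..< m - (m-t)/real(n'+2)}" by auto
  qed
  have un: "(\<Union>n. A n) = {t<..<m}"
  proof safe
    fix x n assume "x \<in> A n" then show "x \<in> {t<..<m}"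
      using tm unfolding A_def by (auto) (smt (verit) divide_pos_pos of_nat_0_le_iff)
  next
    fix x assume x: "x \<in> {t<..<m}"
    obtain n where n: "(m - t) / (m - x) < real n" using reals_Archimedean2 by blast
    have "(m - t) / real (n + 2) < m - x"
      using n x by (simp add: field_simps)
    then have "x \<in> A n" using x unfolding A_def by auto
    then show "x \<in> (\<Union>n. A n)" by blast
  qed
  have "GG J t m = (SUP n. emeasure ?N (A n))"
    unfolding GG_def un[symmetric] by (rule SUP_emeasure_incseq[OF _ inc, symmetric]) (auto simp: A_def)
  also have "\<dots> \<le> y"
  proof (rule SUP_least)
    fix n
    show "emeasure ?N (A n) \<le> y"
    proof (cases "m - (m - t) / real (n + 2) \<le> t")
      case True then show ?thesis by (simp add: A_def)
    next
      case False
      moreover have "m - (m - t) / real (n + 2) < m" using tm by (simp add: field_simps)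
      ultimately show ?thesis using le unfolding A_def GG_def by auto
    qed
  qed
  finally show ?thesis .
qed

lemma G_lim0:
  assumes b: "0 < b"
  shows "(SUP n. GG J (b / real (n + 2)) s) = GG J 0 s"
proof -
  let ?N = "density lebesgue (hh J)"
  define A where "A n = {b / real (n + 2)<..<s}" for n :: nat
  have inc: "incseq A"
    unfolding A_def incseq_def
  proof (intro allI impI subsetI)
    fix n n' x assume nn: "n \<le> n'" and x: "x \<in> {b/real(n+2)<..<s}"
    have "b/real(n'+2) \<le> b/real(n+2)" using b nn by (intro divide_left_mono) auto
    with x show "x \<in> {b/real(n'+2)<..<s}" by auto
  qed
  have un: "(\<Union>n. A n) = {0<..<s}"
  proof safe
    fix x n assume "x \<in> A n" then show "x \<in> {0<..<s}"
      using b unfolding A_def by (auto) (smt (verit) divide_pos_pos of_nat_0_le_iff)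
  next
    fix x assume x: "x \<in> {0<..<s}"
    obtain n where n: "b / x < real n" using reals_Archimedean2 by blast
    have "b / real (n + 2) < x"
      using n x b by (simp add: field_simps)
    then have "x \<in> A n" using x unfolding A_def by auto
    then show "x \<in> (\<Union>n. A n)" by blast
  qed
  show ?thesis
    unfolding GG_def un[symmetric] A_def[symmetric] by (rule SUP_emeasure_incseq[OF _ inc]) (auto simp: A_def)
qed

definition Phi :: "nat \<Rightarrow> (real \<Rightarrow> ennreal) \<Rightarrow> real \<Rightarrow> ennreal" where
  "Phi j u t = (\<integral>\<^sup>+ s. u s * hh J s * GG J t s ^ (j - 1) * indicator {t<..<1} s \<partial>lebesgue)"

lemma Hop_eq:
  assumes t: "t \<in> {0<..<1}"
  shows "Hop j J f t = ennreal (1 / fact (j - 1)) * Phi j (\<lambda>s. ennreal \<bar>f s\<bar>) t"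
proof -
  have eq: "ennreal (\<bar>f s\<bar> / J s) * (\<integral>\<^sup>+ r. ennreal (1 / J r) * indicator {t<..<s} r \<partial>lebesgue) ^ (j - 1) *
      indicator {t<..<1} s = ennreal \<bar>f s\<bar> * hh J s * GG J t s ^ (j - 1) * indicator {t<..<1} s" for s
  proof (cases "s \<in> {t<..<1}")
    case True
    then have s01: "s \<in> {0<..<1}" using t by auto
    have inner: "(\<integral>\<^sup>+ r. ennreal (1 / J r) * indicator {t<..<s} r \<partial>lebesgue) = GG J t s"
      unfolding G_int using s01 t
      by (intro nn_integral_cong) (auto simp: hh_def indicator_def)
    have Js: "J s > 0" using s01 Jpos by auto
    have "ennreal (\<bar>f s\<bar> / J s) = ennreal (\<bar>f s\<bar> * (1 / J s))" by simp
    also have "\<dots> = ennreal \<bar>f s\<bar> * ennreal (1 / J s)" using Js by (intro ennreal_mult) auto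
    finally have "ennreal (\<bar>f s\<bar> / J s) = ennreal \<bar>f s\<bar> * hh J s"
      using s01 by (simp add: hh_def)
    then show ?thesis using True inner by simp
  qed simp
  show ?thesis unfolding Hop_def Phi_def eq ..
qed

lemma Phi_anti: "t \<le> t' \<Longrightarrow> Phi j u t' \<le> Phi j u t"
  unfolding Phi_def
proof (intro nn_integral_mono)
  fix s assume tt: "t \<le> t'"
  show "u s * hh J s * GG J t' s ^ (j - 1) * indicator {t'<..<1} s
      \<le> u s * hh J s * GG J t s ^ (j - 1) * indicator {t<..<1} s"
  proof (cases "s \<in> {t'<..<1}")
    case True
    then have "GG J t' s ^ (j - 1) \<le> GG J t s ^ (j - 1)"
      using tt by (intro power_mono_ennreal G_mono) auto
    then show ?thesis using True tt by (auto intro: mult_left_mono)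
  qed simp
qed

lemma Phi_meas: "Phi j u \<in> borel_measurable borel"
  by (rule antitone_measurable) (rule Phi_anti)

lemma Phi_restrict: "Phi j u t = Phi j (\<lambda>s. u s * indicator {0<..<1} s) t"
  unfolding Phi_def by (intro nn_integral_cong) (auto simp: hh_def indicator_def)

lemma G_pow_meas: "(\<lambda>s. GG J t s ^ k) \<in> borel_measurable lebesgue"
  by (intro borel_to_lebesgue mono_measurable power_mono_ennreal G_mono) auto

lemma Phi_sup_aux:
  assumes um: "u \<in> borel_measurable lebesgue"
  shows "(SUP t\<in>{0<..<1}. Phi j u t) = (\<integral>\<^sup>+ s. u s * hh J s * GG J 0 s ^ (j - 1) * indicator {0<..<1} s \<partial>lebesgue)"
proof (rule antisym)
  show "(SUP t\<in>{0<..<1}. Phi j u t) \<le> (\<integral>\<^sup>+ s. u s * hh J s * GG J 0 s ^ (j - 1) * indicator {0<..<1} s \<partial>lebesgue)"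
  proof (intro SUP_least)
    fix t :: real assume t: "t \<in> {0<..<1}"
    show "Phi j u t \<le> (\<integral>\<^sup>+ s. u s * hh J s * GG J 0 s ^ (j - 1) * indicator {0<..<1} s \<partial>lebesgue)"
      unfolding Phi_def
    proof (intro nn_integral_mono)
      fix s
      show "u s * hh J s * GG J t s ^ (j - 1) * indicator {t<..<1} s
          \<le> u s * hh J s * GG J 0 s ^ (j - 1) * indicator {0<..<1} s"
      proof (cases "s \<in> {t<..<1}")
        case True
        then have "GG J t s ^ (j - 1) \<le> GG J 0 s ^ (j - 1)"
          using t by (intro power_mono_ennreal G_mono) auto
        then show ?thesis using True t by (auto intro: mult_left_mono)
      qed simp
    qed
  qed
next
  define tn where "tn n = 1 / real (n + 2)" for n :: nat
  have tn01: "tn n \<in> {0<..<1}" for n unfolding tn_def by auto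
  have tn_dec: "n \<le> m \<Longrightarrow> tn m \<le> tn n" for n m
    unfolding tn_def by (intro divide_left_mono) auto
  define F where "F n s = u s * hh J s * GG J (tn n) s ^ (j - 1) * indicator {tn n<..<1} s" for n s
  have Fm: "F n \<in> borel_measurable lebesgue" for n
    unfolding F_def
    by (intro borel_measurable_times_ennreal um hh_meas G_pow_meas borel_measurable_indicator) simp
  have Finc: "incseq F"
  proof (intro incseq_SucI le_funI)
    fix n s
    have le: "tn (Suc n) \<le> tn n" by (rule tn_dec) simp
    show "F n s \<le> F (Suc n) s"
    proof (cases "s \<in> {tn n<..<1}")
      case True
      then have "GG J (tn n) s ^ (j - 1) \<le> GG J (tn (Suc n)) s ^ (j - 1)"
        using le by (intro power_mono_ennreal G_mono) auto
      then show ?thesis using True le unfolding F_def by (auto intro: mult_left_mono)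
    qed (simp add: F_def)
  qed
  have pt: "u s * hh J s * GG J 0 s ^ (j - 1) * indicator {0<..<1} s \<le> (SUP n. F n s)" for s
  proof (cases "s \<in> {0<..<1}")
    case True
    obtain N :: nat where N: "1 / s < real N" using reals_Archimedean2 by blast
    have tnN: "tn N < s"
      using N True unfolding tn_def by (simp add: field_simps)
    have zinc: "incseq (\<lambda>n. GG J (tn n) s)"
      by (intro incseq_SucI G_mono tn_dec) auto
    have "GG J 0 s = (SUP n. GG J (tn n) s)"
      using G_lim0[of 1 s] unfolding tn_def by simp
    then have "GG J 0 s ^ (j - 1) = (SUP n. GG J (tn n) s ^ (j - 1))"
      using SUP_power_ennreal[OF zinc] by simp
    then have "u s * hh J s * GG J 0 s ^ (j - 1) = (SUP n. u s * hh J s * GG J (tn n) s ^ (j - 1))"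
      by (simp add: SUP_mult_left_ennreal)
    also have "\<dots> \<le> (SUP n. F n s)"
    proof (intro SUP_least)
      fix n
      have "u s * hh J s * GG J (tn n) s ^ (j - 1) \<le> u s * hh J s * GG J (tn (max n N)) s ^ (j - 1)"
        by (intro mult_left_mono power_mono_ennreal G_mono tn_dec) auto
      also have "\<dots> = F (max n N) s"
        using tnN tn_dec[of N "max n N"] True unfolding F_def by auto
      also have "\<dots> \<le> (SUP n. F n s)" by (rule SUP_upper) auto
      finally show "u s * hh J s * GG J (tn n) s ^ (j - 1) \<le> (SUP n. F n s)" .
    qed
    finally show ?thesis using True by simp
  qed simp
  have "(\<integral>\<^sup>+ s. u s * hh J s * GG J 0 s ^ (j - 1) * indicator {0<..<1} s \<partial>lebesgue)
      \<le> (\<integral>\<^sup>+ s. (SUP n. F n s) \<partial>lebesgue)"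
    by (intro nn_integral_mono pt)
  also have "\<dots> = (SUP n. integral\<^sup>N lebesgue (F n))"
    by (rule nn_integral_monotone_convergence_SUP[OF Finc Fm])
  also have "\<dots> \<le> (SUP t\<in>{0<..<1}. Phi j u t)"
  proof (intro SUP_least)
    fix n
    have "integral\<^sup>N lebesgue (F n) = Phi j u (tn n)" unfolding F_def Phi_def by simp
    also have "\<dots> \<le> (SUP t\<in>{0<..<1}. Phi j u t)" using tn01 by (intro SUP_upper) auto
    finally show "integral\<^sup>N lebesgue (F n) \<le> (SUP t\<in>{0<..<1}. Phi j u t)" .
  qed
  finally show "(\<integral>\<^sup>+ s. u s * hh J s * GG J 0 s ^ (j - 1) * indicator {0<..<1} s \<partial>lebesgue)
      \<le> (SUP t\<in>{0<..<1}. Phi j u t)" .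
qed

lemma Phi_median:
  assumes j: "j \<ge> 1" and t: "0 < t" and tb: "t < b" and b1: "b \<le> 1"
    and u: "\<And>s. 0 < s \<Longrightarrow> s < b \<Longrightarrow> 1 \<le> u s"
  shows "(GG J t b / 2) ^ j \<le> Phi j u t"
proof -
  define H where "H = GG J t b"
  have Hfin: "H / 2 \<noteq> \<infinity>" using G_fin[OF t, of b] unfolding H_def
    by (simp add: ennreal_divide_eq_top_iff)
  define S where "S = {s. t \<le> s \<and> s \<le> b \<and> GG J t s \<le> H / 2}"
  define m where "m = Sup S"
  have tS: "t \<in> S" unfolding S_def using tb by (auto simp: G_empty)
  have bdd: "bdd_above S" unfolding S_def by (auto intro: bdd_aboveI[of _ b])
  have tm: "t \<le> m" unfolding m_def using tS bdd by (rule cSup_upper)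
  have mb: "m \<le> b" unfolding m_def using tS by (intro cSup_least) (auto simp: S_def)
  have c1: "GG J t m \<le> H / 2"
  proof (cases "t = m")
    case True then show ?thesis by (simp add: G_empty)
  next
    case False
    then have "t < m" using tm by auto
    then show ?thesis
    proof (rule G_left)
      fix s assume s: "t < s" "s < m"
      then obtain s' where s': "s' \<in> S" "s < s'"
        using less_cSup_iff[of S s] tS bdd unfolding m_def by auto
      have "GG J t s \<le> GG J t s'" using s' by (intro G_mono) auto
      also have "\<dots> \<le> H / 2" using s' by (auto simp: S_def)
      finally show "GG J t s \<le> H / 2" .
    qed
  qed
  have c2: "H / 2 < GG J t s" if s: "m < s" "s \<le> b" for s
  proof (rule ccontr)
    assume "\<not> H / 2 < GG J t s"
    then have "s \<in> S" using s tm unfolding S_def by auto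
    then have "s \<le> m" unfolding m_def using bdd by (rule cSup_upper)
    then show False using s by auto
  qed
  have c3: "H / 2 \<le> GG J m b"
  proof -
    have "H / 2 + H / 2 = H" by (rule half_add)
    also have "H = GG J t m + GG J m b" unfolding H_def using tm mb by (rule G_add)
    also have "\<dots> \<le> H / 2 + GG J m b" using c1 by (rule add_right_mono)
    finally show ?thesis using Hfin by (simp add: ennreal_add_left_cancel_le)
  qed
  have "(H / 2) ^ j = (H / 2) ^ (j - 1) * (H / 2)" using j
    by (metis One_nat_def Suc_pred less_eq_Suc_le power_Suc2)
  also have "\<dots> \<le> (H / 2) ^ (j - 1) * GG J m b" using c3 by (rule mult_left_mono) simp
  also have "\<dots> = (\<integral>\<^sup>+ s. (H / 2) ^ (j - 1) * (hh J s * indicator {m<..<b} s) \<partial>lebesgue)"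
  proof -
    have mm: "(\<lambda>s. hh J s * indicator {m<..<b} s) \<in> borel_measurable lebesgue"
      by (intro borel_measurable_times_ennreal hh_meas borel_measurable_indicator) simp
    show ?thesis
      using nn_integral_cmult[OF mm, of "(H / 2) ^ (j - 1)"] by (simp add: G_int)
  qed
  also have "\<dots> \<le> Phi j u t"
    unfolding Phi_def
  proof (intro nn_integral_mono)
    fix s
    show "(H / 2) ^ (j - 1) * (hh J s * indicator {m<..<b} s)
        \<le> u s * hh J s * GG J t s ^ (j - 1) * indicator {t<..<1} s"
    proof (cases "s \<in> {m<..<b}")
      case True
      then have s: "m < s" "s < b" by auto
      have "(H / 2) ^ (j - 1) \<le> GG J t s ^ (j - 1)"
        using c2[of s] s by (intro power_mono_ennreal) auto
      moreover have "1 \<le> u s" using s tm t by (intro u) auto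
      ultimately have "1 * hh J s * (H / 2) ^ (j - 1) \<le> u s * hh J s * GG J t s ^ (j - 1)"
        by (intro mult_mono) auto
      moreover have "s \<in> {t<..<1}" using s tm b1 by auto
      ultimately show ?thesis using True by (simp add: ac_simps)
    qed simp
  qed
  finally show ?thesis unfolding H_def .
qed

lemma Phi_ub:
  assumes j: "j \<ge> 1" and t: "0 \<le> t"
    and u: "AE s in lebesgue. s \<in> {t<..<1} \<longrightarrow> u s \<le> indicator {..<hi} s"
  shows "Phi j u t \<le> GG J t hi ^ j"
proof -
  have "Phi j u t \<le> (\<integral>\<^sup>+ s. GG J t hi ^ (j - 1) * (hh J s * indicator {t<..<hi} s) \<partial>lebesgue)"
    unfolding Phi_def
  proof (intro nn_integral_mono_AE, use u in \<open>eventually_elim\<close>)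
    fix s assume us: "s \<in> {t<..<1} \<longrightarrow> u s \<le> indicator {..<hi} s"
    show "u s * hh J s * GG J t s ^ (j - 1) * indicator {t<..<1} s
        \<le> GG J t hi ^ (j - 1) * (hh J s * indicator {t<..<hi} s)"
    proof (cases "s \<in> {t<..<1}")
      case True
      show ?thesis
      proof (cases "s < hi")
        case True2: True
        have "u s \<le> 1" using us True True2 by auto
        moreover have "GG J t s ^ (j - 1) \<le> GG J t hi ^ (j - 1)"
          using True2 by (intro power_mono_ennreal G_mono) auto
        ultimately have "u s * hh J s * GG J t s ^ (j - 1) \<le> 1 * hh J s * GG J t hi ^ (j - 1)"
          by (intro mult_mono) auto
        then show ?thesis using True True2 by (simp add: ac_simps)
      next
        case False
        then have "u s = 0" using us True by auto
        then show ?thesis by simp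
      qed
    qed simp
  qed
  also have "\<dots> = GG J t hi ^ (j - 1) * GG J t hi"
  proof -
    have m: "(\<lambda>s. hh J s * indicator {t<..<hi} s) \<in> borel_measurable lebesgue"
      by (intro borel_measurable_times_ennreal hh_meas borel_measurable_indicator) simp
    show ?thesis
      using nn_integral_cmult[OF m, of "GG J t hi ^ (j-1)"] by (simp add: G_int)
  qed
  also have "\<dots> = GG J t hi ^ j" using j
    by (metis One_nat_def Suc_pred less_eq_Suc_le power_Suc2)
  finally show ?thesis .
qed

lemma G_stmt: "0 \<le> t \<Longrightarrow> s \<le> 1 \<Longrightarrow> (\<integral>\<^sup>+ r\<in>{t<..<s}. ennreal (1 / J r) \<partial>lebesgue) = GG J t s"
  unfolding G_int by (intro nn_integral_cong) (auto simp: hh_def indicator_def)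

lemma Hop_meas: "Hop j J f \<in> borel_measurable M01"
proof (rule meas_M01_cong)
  show "Hop j J f t = ennreal (1 / fact (j - 1)) * Phi j (\<lambda>s. ennreal \<bar>f s\<bar>) t" if "t \<in> {0<..<1}" for t
    using that by (rule Hop_eq)
  show "(\<lambda>t. ennreal (1 / fact (j - 1)) * Phi j (\<lambda>s. ennreal \<bar>f s\<bar>) t) \<in> borel_measurable borel"
    by (intro borel_measurable_times_ennreal borel_measurable_const Phi_meas)
qed

lemma Hop_anti: "0 < x \<Longrightarrow> x \<le> y \<Longrightarrow> y < 1 \<Longrightarrow> Hop j J f y \<le> Hop j J f x"
  by (subst (1 2) Hop_eq) (auto intro!: mult_left_mono Phi_anti)

lemma G0_tendsto:
  assumes fin: "GG J 0 1 < \<infinity>"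
  shows "((\<lambda>a. GG J 0 a) \<longlongrightarrow> 0) (at_right 0)"
proof -
  let ?N = "density lebesgue (hh J)"
  define tn where "tn n = 1 / real (n + 2)" for n :: nat
  define A where "A n = {0<..<tn n}" for n
  have dec: "decseq A" unfolding A_def decseq_def
  proof (intro allI impI subsetI)
    fix n m x assume nm: "n \<le> m" and x: "x \<in> {0<..<tn m}"
    have "tn m \<le> tn n" unfolding tn_def using nm by (intro divide_left_mono) auto
    with x show "x \<in> {0<..<tn n}" by auto
  qed
  have finA: "emeasure ?N (A n) \<noteq> \<infinity>" for n
  proof -
    have "emeasure ?N (A n) = GG J 0 (tn n)" unfolding A_def GG_def ..
    also have "\<dots> \<le> GG J 0 1" unfolding tn_def by (intro G_mono) auto
    finally show ?thesis using fin by auto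
  qed
  have inter: "(\<Inter>n. A n) = {}"
  proof safe
    fix x assume x: "x \<in> (\<Inter>n. A n)"
    then have x0: "0 < x" unfolding A_def by auto
    obtain n :: nat where n: "1 / x < real n" using reals_Archimedean2 by blast
    have "tn n < x" using n x0 unfolding tn_def by (simp add: field_simps)
    moreover have "x < tn n" using x unfolding A_def by auto
    ultimately show "x \<in> {}" by simp
  qed
  have INF0: "(INF n. emeasure ?N (A n)) = 0"
  proof -
    have r: "range A \<subseteq> sets ?N" unfolding A_def by auto
    show ?thesis using INF_emeasure_decseq[OF r dec finA] inter by simp
  qed
  show ?thesis
    unfolding order_tendsto_iff
  proof (intro conjI allI impI)
    fix e :: ennreal assume e: "0 < e"
    then obtain n where n: "emeasure ?N (A n) < e" using INF0 by (metis INF_less_iff)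
    have tn0: "0 < tn n" unfolding tn_def by simp
    show "eventually (\<lambda>a. GG J 0 a < e) (at_right 0)"
      unfolding eventually_at_right_field
    proof (intro exI[of _ "tn n"] conjI tn0 allI impI)
      fix a :: real assume "0 < a" "a < tn n"
      then have "GG J 0 a \<le> GG J 0 (tn n)" by (intro G_mono) auto
      also have "\<dots> < e" using n unfolding A_def GG_def .
      finally show "GG J 0 a < e" .
    qed
  qed simp
qed

lemma Hop_bound:
  assumes j: "j \<ge> 1" and a: "0 < a" "a \<le> 1" and f: "AE x in M01. ennreal \<bar>f x\<bar> \<le> 1"
    and t: "t \<in> {0<..<1}"
  shows "Hop j J (\<lambda>t. indicator {0<..<a} t * f t) t \<le> ennreal (1 / fact (j - 1)) * GG J t a ^ j"
proof -
  have "AE s in lebesgue. s \<in> {t<..<1} \<longrightarrow> ennreal \<bar>indicator {0<..<a} s * f s\<bar> \<le> indicator {..<a} s"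
    using f unfolding AE_M01
  proof (rule eventually_mono)
    fix s assume fs: "s \<in> {0<..<1} \<longrightarrow> ennreal \<bar>f s\<bar> \<le> 1"
    show "s \<in> {t<..<1} \<longrightarrow> ennreal \<bar>indicator {0<..<a} s * f s\<bar> \<le> indicator {..<a} s"
      using fs t by (auto simp: indicator_def)
  qed
  then have "Phi j (\<lambda>s. ennreal \<bar>indicator {0<..<a} s * f s\<bar>) t \<le> GG J t a ^ j"
    using t by (intro Phi_ub j) auto
  then show ?thesis using t by (subst Hop_eq) (auto intro: mult_left_mono)
qed

lemma part_a1:
  assumes j: "j \<ge> 1" and X: "ri_norm \<rho>" and fin: "GG J 0 1 < \<infinity>"
  shows "((\<lambda>a. SUP f \<in> {f \<in> borel_measurable M01. Linf (\<lambda>t. ennreal \<bar>f t\<bar>) \<le> 1}.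
               \<rho> (Hop j J (\<lambda>t. indicator {0<..<a} t * f t))) \<longlongrightarrow> 0) (at_right 0)"
proof -
  define g where "g a = enn2real (GG J 0 a)" for a
  define r1 where "r1 = enn2real (\<rho> (\<lambda>_. 1))"
  define B where "B a = ennreal (1 / fact (j-1) * g a ^ j * r1)" for a
  have gt: "(g \<longlongrightarrow> 0) (at_right 0)" unfolding g_def
    using G0_tendsto[OF fin] by (intro tendsto_enn2real) auto
  have "((\<lambda>a. 1 / fact (j-1) * g a ^ j * r1) \<longlongrightarrow> 1 / fact (j-1) * 0 ^ j * r1) (at_right 0)"
    by (intro tendsto_intros gt)
  moreover have "(0::real) ^ j = 0" using j by simp
  ultimately have "((\<lambda>a. 1 / fact (j-1) * g a ^ j * r1) \<longlongrightarrow> 0) (at_right 0)" by simp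
  then have Bt: "(B \<longlongrightarrow> 0) (at_right 0)" unfolding B_def using tendsto_ennrealI by fastforce
  have r1: "\<rho> (\<lambda>_. 1) = ennreal r1" unfolding r1_def using rho_one[OF X] by simp
  show ?thesis
  proof (rule tendsto_sandwich[OF _ _ tendsto_const Bt])
    show "eventually (\<lambda>a. 0 \<le> (SUP f \<in> {f \<in> borel_measurable M01. Linf (\<lambda>t. ennreal \<bar>f t\<bar>) \<le> 1}.
               \<rho> (Hop j J (\<lambda>t. indicator {0<..<a} t * f t)))) (at_right 0)" by simp
    show "eventually (\<lambda>a. (SUP f \<in> {f \<in> borel_measurable M01. Linf (\<lambda>t. ennreal \<bar>f t\<bar>) \<le> 1}.
               \<rho> (Hop j J (\<lambda>t. indicator {0<..<a} t * f t))) \<le> B a) (at_right 0)"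
      unfolding eventually_at_right_field
    proof (intro exI[of _ 1] conjI allI impI)
      fix a :: real assume a: "0 < a" "a < 1"
      have ga: "GG J 0 a = ennreal (g a)"
      proof -
        have "GG J 0 a \<le> GG J 0 1" using a by (intro G_mono) auto
        then have "GG J 0 a < \<infinity>" using fin by auto
        then show ?thesis unfolding g_def by simp
      qed
      have cE: "ennreal (1 / fact (j - 1)) * GG J 0 a ^ j = ennreal (1 / fact (j-1) * g a ^ j)"
      proof -
        have g0: "0 \<le> g a" unfolding g_def by simp
        have "ennreal (g a) ^ j = ennreal (g a ^ j)" using g0 by (rule ennreal_power)
        moreover have "ennreal (1 / fact (j-1) * g a ^ j) = ennreal (1 / fact (j - 1)) * ennreal (g a ^ j)"
          using g0 by (intro ennreal_mult) auto
        ultimately show ?thesis unfolding ga by simp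
      qed
      show "(SUP f \<in> {f \<in> borel_measurable M01. Linf (\<lambda>t. ennreal \<bar>f t\<bar>) \<le> 1}.
               \<rho> (Hop j J (\<lambda>t. indicator {0<..<a} t * f t))) \<le> B a"
      proof (intro SUP_least)
        fix f assume f: "f \<in> {f \<in> borel_measurable M01. Linf (\<lambda>t. ennreal \<bar>f t\<bar>) \<le> 1}"
        then have fle: "AE x in M01. ennreal \<bar>f x\<bar> \<le> 1" by (intro Linf_le1) auto
        have "\<rho> (Hop j J (\<lambda>t. indicator {0<..<a} t * f t)) \<le> \<rho> (\<lambda>_. ennreal (1 / fact (j-1) * g a ^ j))"
        proof (rule rho_mono[OF X Hop_meas])
          show "(\<lambda>_. ennreal (1 / fact (j-1) * g a ^ j)) \<in> borel_measurable M01" by simp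
          fix t :: real assume t: "t \<in> {0<..<1}"
          have "Hop j J (\<lambda>t. indicator {0<..<a} t * f t) t \<le> ennreal (1 / fact (j - 1)) * GG J t a ^ j"
            using a t by (intro Hop_bound j fle) auto
          also have "\<dots> \<le> ennreal (1 / fact (j - 1)) * GG J 0 a ^ j"
            using t by (intro mult_left_mono power_mono_ennreal G_mono) auto
          finally show "Hop j J (\<lambda>t. indicator {0<..<a} t * f t) t \<le> ennreal (1 / fact (j-1) * g a ^ j)"
            using cE by simp
        qed
        also have "\<dots> = B a"
        proof -
          have c0: "0 \<le> 1 / fact (j-1) * g a ^ j" unfolding g_def by simp
          have "\<rho> (\<lambda>_. ennreal (1 / fact (j-1) * g a ^ j)) = ennreal (1 / fact (j-1) * g a ^ j) * ennreal r1"
            using rho_const[OF X c0] r1 by simp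
          also have "\<dots> = ennreal (1 / fact (j-1) * g a ^ j * r1)"
            using c0 by (intro ennreal_mult[symmetric]) (auto simp: r1_def)
          finally show ?thesis unfolding B_def .
        qed
        finally show "\<rho> (Hop j J (\<lambda>t. indicator {0<..<a} t * f t)) \<le> B a" .
      qed
    qed simp
  qed
qed

lemma Rfun_meas: "(\<lambda>t. indicator {0<..<a} t * (\<integral>\<^sup>+ r\<in>{t<..<1}. ennreal (1 / J r) \<partial>lebesgue) ^ j) \<in> borel_measurable M01"
proof (rule meas_M01_cong)
  show "indicator {0<..<a} t * (\<integral>\<^sup>+ r\<in>{t<..<1}. ennreal (1 / J r) \<partial>lebesgue) ^ j
      = indicator {0<..<a} t * GG J t 1 ^ j" if "t \<in> {0<..<1}" for t
    using that by (subst G_stmt) auto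
  show "(\<lambda>t. indicator {0<..<a} t * GG J t 1 ^ j :: ennreal) \<in> borel_measurable borel"
    by (intro borel_measurable_times_ennreal borel_measurable_indicator antitone_measurable
        power_mono_ennreal G_mono) auto
qed

lemma four_pow: "ennreal (fact (j-1) * 4^j) * ennreal (1 / fact (j-1)) = 4 ^ j"
proof -
  have "ennreal (fact (j-1) * 4^j) * ennreal (1 / fact (j-1)) = ennreal (fact (j-1) * 4^j * (1 / fact (j-1)))"
    by (rule ennreal_mult[symmetric]) auto
  also have "\<dots> = ennreal (4 ^ j)" by simp
  also have "\<dots> = 4 ^ j" by (simp add: ennreal_power[symmetric])
  finally show ?thesis .
qed

lemma part_a2:
  assumes j: "j \<ge> 1" and X: "ri_norm \<rho>" and inf: "GG J 0 1 = \<infinity>"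
  shows "((\<lambda>a. SUP f \<in> {f \<in> borel_measurable M01. Linf (\<lambda>t. ennreal \<bar>f t\<bar>) \<le> 1}.
               \<rho> (Hop j J (\<lambda>t. indicator {0<..<a} t * f t))) \<longlongrightarrow> 0) (at_right 0)
         \<longleftrightarrow>
         ((\<lambda>a. \<rho> (\<lambda>t. indicator {0<..<a} t *
                  (\<integral>\<^sup>+ r\<in>{t<..<1}. ennreal (1 / J r) \<partial>lebesgue) ^ j)) \<longlongrightarrow> 0) (at_right 0)"
    (is "(?L \<longlongrightarrow> 0) _ \<longleftrightarrow> (?R \<longlongrightarrow> 0) _")
proof
  assume R: "(?R \<longlongrightarrow> 0) (at_right 0)"
  have cR: "((\<lambda>a. ennreal (1 / fact (j-1)) * ?R a) \<longlongrightarrow> 0) (at_right 0)"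
    using ennreal_tendsto_cmult[OF _ R, of "ennreal (1 / fact (j-1))"] by simp
  show "(?L \<longlongrightarrow> 0) (at_right 0)"
  proof (rule tendsto_sandwich[OF _ _ tendsto_const cR])
    show "eventually (\<lambda>a. 0 \<le> ?L a) (at_right 0)" by simp
    show "eventually (\<lambda>a. ?L a \<le> ennreal (1 / fact (j-1)) * ?R a) (at_right 0)"
      unfolding eventually_at_right_field
    proof (intro exI[of _ 1] conjI allI impI)
      fix a :: real assume a: "0 < a" "a < 1"
      show "?L a \<le> ennreal (1 / fact (j-1)) * ?R a"
      proof (intro SUP_least)
        fix f assume f: "f \<in> {f \<in> borel_measurable M01. Linf (\<lambda>t. ennreal \<bar>f t\<bar>) \<le> 1}"
        then have fle: "AE x in M01. ennreal \<bar>f x\<bar> \<le> 1" by (intro Linf_le1) auto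
        have "\<rho> (Hop j J (\<lambda>t. indicator {0<..<a} t * f t))
            \<le> \<rho> (\<lambda>t. ennreal (1 / fact (j-1)) * (indicator {0<..<a} t *
                  (\<integral>\<^sup>+ r\<in>{t<..<1}. ennreal (1 / J r) \<partial>lebesgue) ^ j))"
        proof (rule rho_mono[OF X Hop_meas])
          show "(\<lambda>t. ennreal (1 / fact (j-1)) * (indicator {0<..<a} t *
                  (\<integral>\<^sup>+ r\<in>{t<..<1}. ennreal (1 / J r) \<partial>lebesgue) ^ j)) \<in> borel_measurable M01"
            by (intro borel_measurable_times_ennreal borel_measurable_const Rfun_meas)
          fix t :: real assume t: "t \<in> {0<..<1}"
          have "Hop j J (\<lambda>t. indicator {0<..<a} t * f t) t \<le> ennreal (1 / fact (j - 1)) * GG J t a ^ j"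
            using a t by (intro Hop_bound j fle) auto
          also have "\<dots> \<le> ennreal (1 / fact (j - 1)) * (indicator {0<..<a} t * GG J t 1 ^ j)"
          proof (intro mult_left_mono)
            show "GG J t a ^ j \<le> indicator {0<..<a} t * GG J t 1 ^ j"
            proof (cases "t < a")
              case True then show ?thesis using t a by (auto intro!: power_mono_ennreal G_mono)
            next
              case False then show ?thesis using j by (simp add: G_empty)
            qed
          qed simp
          also have "\<dots> = ennreal (1 / fact (j-1)) * (indicator {0<..<a} t *
                  (\<integral>\<^sup>+ r\<in>{t<..<1}. ennreal (1 / J r) \<partial>lebesgue) ^ j)"
            using t by (subst G_stmt) auto
          finally show "Hop j J (\<lambda>t. indicator {0<..<a} t * f t) t \<le> \<dots>" .
        qed
        also have "\<dots> = ennreal (1 / fact (j-1)) * ?R a"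
          by (rule rho_hom[OF X Rfun_meas]) simp
        finally show "\<rho> (Hop j J (\<lambda>t. indicator {0<..<a} t * f t)) \<le> ennreal (1 / fact (j-1)) * ?R a" .
      qed
    qed simp
  qed
next
  assume L: "(?L \<longlongrightarrow> 0) (at_right 0)"
  define K where "K = fact (j-1) * (4::real)^j"
  have K0: "0 < K" unfolding K_def by simp
  show "(?R \<longlongrightarrow> 0) (at_right 0)"
    unfolding order_tendsto_iff
  proof (intro conjI allI impI)
    fix e :: ennreal assume e: "0 < e"
    define e' where "e' = (if e = \<infinity> then 1 else enn2real e)"
    have e'0: "0 < e'" using e unfolding e'_def by (auto simp: enn2real_positive_iff top.not_eq_extremum)
    have e'e: "ennreal e' \<le> e" unfolding e'_def by (auto simp: top.not_eq_extremum)
    define \<delta> where "\<delta> = e' / (2 * K)"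
    have \<delta>0: "0 < \<delta>" unfolding \<delta>_def using e'0 K0 by simp
    have Kd: "ennreal K * ennreal \<delta> < e"
    proof -
      have "ennreal K * ennreal \<delta> = ennreal (K * \<delta>)" using K0 \<delta>0 by (simp add: ennreal_mult)
      also have "K * \<delta> = e' / 2" unfolding \<delta>_def using K0 by simp
      also have "ennreal (e' / 2) < ennreal e'" using e'0 by (simp add: ennreal_lessI)
      finally show ?thesis using e'e by simp
    qed
    have "eventually (\<lambda>b. ?L b < ennreal \<delta>) (at_right 0)"
      using L \<delta>0 unfolding order_tendsto_iff by simp
    then obtain b0 where b0: "0 < b0" "\<And>b. 0 < b \<Longrightarrow> b < b0 \<Longrightarrow> ?L b < ennreal \<delta>"
      unfolding eventually_at_right_field by auto
    define b where "b = min b0 1 / 2"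
    have b: "0 < b" "b < b0" "b < 1" unfolding b_def using b0 by auto
    have Lb: "?L b < ennreal \<delta>" using b b0 by auto
    have f1: "(\<lambda>_. 1::real) \<in> {f \<in> borel_measurable M01. Linf (\<lambda>t. ennreal \<bar>f t\<bar>) \<le> 1}"
      using Linf_const by simp
    have hb: "\<rho> (Hop j J (\<lambda>t. indicator {0<..<b} t * 1)) < ennreal \<delta>"
      using SUP_upper[OF f1, of "\<lambda>f. \<rho> (Hop j J (\<lambda>t. indicator {0<..<b} t * f t))"] Lb by simp
    define D where "D = GG J b 1"
    have Dfin: "D < \<infinity>" unfolding D_def using b by (intro G_fin) auto
    have "GG J 0 b + GG J b 1 = \<infinity>" using G_add[of 0 b 1] inf b by simp
    then have G0b: "GG J 0 b = \<infinity>"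
      using Dfin unfolding D_def by (auto simp: ennreal_add_eq_top)
    have "D < (SUP n. GG J (b / real (n + 2)) b)" using G_lim0[OF b(1), of b] G0b Dfin by metis
    then obtain n where n: "D < GG J (b / real (n + 2)) b" by (auto simp: less_SUP_iff)
    define a0 where "a0 = b / real (n + 2)"
    have a0: "0 < a0" "a0 < b" unfolding a0_def using b by (auto simp: field_simps intro: add_pos_nonneg)
    show "eventually (\<lambda>a. ?R a < e) (at_right 0)"
      unfolding eventually_at_right_field
    proof (intro exI[of _ a0] conjI a0 allI impI)
      fix a assume a: "0 < a" "a < a0"
      have "?R a \<le> \<rho> (\<lambda>t. ennreal K * Hop j J (\<lambda>t. indicator {0<..<b} t * 1) t)"
      proof (rule rho_mono[OF X Rfun_meas])
        show "(\<lambda>t. ennreal K * Hop j J (\<lambda>t. indicator {0<..<b} t * 1) t) \<in> borel_measurable M01"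
          by (intro borel_measurable_times_ennreal borel_measurable_const Hop_meas)
        fix t :: real assume t: "t \<in> {0<..<1}"
        show "indicator {0<..<a} t * (\<integral>\<^sup>+ r\<in>{t<..<1}. ennreal (1 / J r) \<partial>lebesgue) ^ j
            \<le> ennreal K * Hop j J (\<lambda>t. indicator {0<..<b} t * 1) t"
        proof (cases "t < a")
          case False then show ?thesis by simp
        next
          case True
          then have tb: "t < b" "t < a0" using a a0 by auto
          have "D \<le> GG J t b"
            using n tb unfolding a0_def by (meson G_mono less_imp_le order.trans order_refl less_imp_le[OF n])
          then have "GG J t 1 \<le> 2 * GG J t b"
            using G_add[of t b 1] tb b by (simp add: D_def mult_2 add_left_mono)
          then have "GG J t 1 ^ j \<le> (4 * (GG J t b / 2)) ^ j"
            unfolding four_half by (rule power_mono_ennreal)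
          also have "\<dots> = 4 ^ j * (GG J t b / 2) ^ j" by (simp add: power_mult_distrib)
          also have "\<dots> \<le> 4 ^ j * Phi j (\<lambda>s. ennreal \<bar>indicator {0<..<b} s * 1\<bar>) t"
            using t tb b by (intro mult_left_mono Phi_median j) (auto simp: indicator_def)
          also have "\<dots> = ennreal K * Hop j J (\<lambda>t. indicator {0<..<b} t * 1) t"
            using t four_pow[of j] unfolding K_def by (subst Hop_eq) (auto simp: mult.assoc[symmetric])
          finally show ?thesis using True t by (subst G_stmt) auto
        qed
      qed
      also have "\<dots> = ennreal K * \<rho> (Hop j J (\<lambda>t. indicator {0<..<b} t * 1))"
        using K0 by (intro rho_hom[OF X Hop_meas]) simp
      also have "\<dots> < ennreal K * ennreal \<delta>"
        using hb K0 by (intro ennreal_mult_strict_left_mono) auto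
      also have "\<dots> < e" by (rule Kd)
      finally show "?R a < e" .
    qed
  qed simp
qed

lemma Linf_Hop_eq:
  assumes a: "0 < a" "a < 1" and fm: "f \<in> borel_measurable M01"
  shows "Linf (Hop j J (\<lambda>t. indicator {0<..<a} t * f t)) = ennreal (1 / fact (j - 1)) *
    (\<integral>\<^sup>+ t. ennreal \<bar>f t\<bar> * (indicator {0<..<a} t * ennreal (1 / J t) *
                  (\<integral>\<^sup>+ r\<in>{0<..<t}. ennreal (1 / J r) \<partial>lebesgue) ^ (j - 1)) \<partial>M01)"
proof -
  define u where "u s = ennreal \<bar>indicator {0<..<a} s * f s\<bar>" for s
  define u' where "u' s = indicator {0<..<a} s * (ennreal \<bar>f s\<bar> * indicator {0<..<1} s)" for s
  have u'm: "u' \<in> borel_measurable lebesgue"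
  proof -
    have "(\<lambda>s. ennreal \<bar>f s\<bar>) \<in> borel_measurable M01" using fm by measurable
    then have "(\<lambda>s. ennreal \<bar>f s\<bar> * indicator {0<..<1} s) \<in> borel_measurable lebesgue"
      unfolding M01_def by (subst (asm) borel_measurable_restrict_space_iff_ennreal) auto
    moreover have "(\<lambda>s. indicator {0<..<a} s :: ennreal) \<in> borel_measurable lebesgue"
      by (rule borel_measurable_indicator) simp
    ultimately show ?thesis unfolding u'_def using borel_measurable_times_ennreal by blast
  qed
  have Pu: "Phi j u t = Phi j u' t" for t
    unfolding Phi_def u_def u'_def by (intro nn_integral_cong) (auto simp: hh_def indicator_def)
  have "Linf (Hop j J (\<lambda>t. indicator {0<..<a} t * f t)) = (SUP t\<in>{0<..<1}. Hop j J (\<lambda>t. indicator {0<..<a} t * f t) t)"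
    by (rule Linf_antitone) (rule Hop_anti)
  also have "\<dots> = (SUP t\<in>{0<..<1}. ennreal (1 / fact (j - 1)) * Phi j u' t)"
    unfolding Pu[symmetric] u_def by (intro SUP_cong refl) (simp add: Hop_eq)
  also have "\<dots> = ennreal (1 / fact (j - 1)) * (SUP t\<in>{0<..<1}. Phi j u' t)"
    by (simp add: SUP_mult_left_ennreal)
  also have "(SUP t\<in>{0<..<1}. Phi j u' t) = (\<integral>\<^sup>+ s. u' s * hh J s * GG J 0 s ^ (j - 1) * indicator {0<..<1} s \<partial>lebesgue)"
    by (rule Phi_sup_aux[OF u'm])
  also have "\<dots> = (\<integral>\<^sup>+ t. ennreal \<bar>f t\<bar> * (indicator {0<..<a} t * ennreal (1 / J t) *
                  (\<integral>\<^sup>+ r\<in>{0<..<t}. ennreal (1 / J r) \<partial>lebesgue) ^ (j - 1)) \<partial>M01)"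
    unfolding M01_def
  proof (subst nn_integral_restrict_space, simp, intro nn_integral_cong)
    fix t
    show "u' t * hh J t * GG J 0 t ^ (j - 1) * indicator {0<..<1} t =
      ennreal \<bar>f t\<bar> * (indicator {0<..<a} t * ennreal (1 / J t) *
       (\<integral>\<^sup>+ r\<in>{0<..<t}. ennreal (1 / J r) \<partial>lebesgue) ^ (j - 1)) * indicator {0<..<1} t"
    proof (cases "t \<in> {0<..<1}")
      case True
      then have "(\<integral>\<^sup>+ r\<in>{0<..<t}. ennreal (1 / J r) \<partial>lebesgue) = GG J 0 t" by (intro G_stmt) auto
      then show ?thesis using True unfolding u'_def hh_def by (simp add: ac_simps)
    qed (simp add: u'_def)
  qed
  finally show ?thesis .
qed

lemma LHSb_eq:
  assumes X: "ri_norm \<rho>" and a: "0 < a" "a < 1"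
  shows "(SUP f \<in> {f \<in> borel_measurable M01. \<rho> (\<lambda>t. ennreal \<bar>f t\<bar>) \<le> 1}.
               Linf (Hop j J (\<lambda>t. indicator {0<..<a} t * f t)))
    = ennreal (1 / fact (j - 1)) * assoc_norm \<rho> (\<lambda>t. indicator {0<..<a} t * ennreal (1 / J t) *
                  (\<integral>\<^sup>+ r\<in>{0<..<t}. ennreal (1 / J r) \<partial>lebesgue) ^ (j - 1))"
proof -
  have "(SUP f \<in> {f \<in> borel_measurable M01. \<rho> (\<lambda>t. ennreal \<bar>f t\<bar>) \<le> 1}.
               Linf (Hop j J (\<lambda>t. indicator {0<..<a} t * f t)))
      = (SUP f \<in> {f \<in> borel_measurable M01. \<rho> (\<lambda>t. ennreal \<bar>f t\<bar>) \<le> 1}.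
           ennreal (1 / fact (j - 1)) * (\<integral>\<^sup>+ t. ennreal \<bar>f t\<bar> * (indicator {0<..<a} t * ennreal (1 / J t) *
                  (\<integral>\<^sup>+ r\<in>{0<..<t}. ennreal (1 / J r) \<partial>lebesgue) ^ (j - 1)) \<partial>M01))"
    using a by (intro SUP_cong refl Linf_Hop_eq) auto
  also have "\<dots> = ennreal (1 / fact (j - 1)) * assoc_norm \<rho> (\<lambda>t. indicator {0<..<a} t * ennreal (1 / J t) *
                  (\<integral>\<^sup>+ r\<in>{0<..<t}. ennreal (1 / J r) \<partial>lebesgue) ^ (j - 1))"
    by (simp add: SUP_mult_left_ennreal[symmetric] assoc_eq[OF X])
  finally show ?thesis .
qed

lemma part_b1:
  assumes X: "ri_norm \<rho>"
  shows "(((\<lambda>a. SUP f \<in> {f \<in> borel_measurable M01. \<rho> (\<lambda>t. ennreal \<bar>f t\<bar>) \<le> 1}.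
               Linf (Hop j J (\<lambda>t. indicator {0<..<a} t * f t))) \<longlongrightarrow> 0) (at_right 0))
        \<longleftrightarrow>
        ((\<lambda>a. assoc_norm \<rho> (\<lambda>t. indicator {0<..<a} t * ennreal (1 / J t) *
                  (\<integral>\<^sup>+ r\<in>{0<..<t}. ennreal (1 / J r) \<partial>lebesgue) ^ (j - 1))) \<longlongrightarrow> 0) (at_right 0)"
    (is "(?L \<longlongrightarrow> 0) _ \<longleftrightarrow> (?A \<longlongrightarrow> 0) _")
proof -
  define c where "c = ennreal (1 / fact (j - 1))"
  have ev: "eventually (\<lambda>a. ?L a = c * ?A a) (at_right 0)"
    unfolding eventually_at_right_field c_def
    by (intro exI[of _ 1] conjI allI impI LHSb_eq[OF X]) auto
  have "(?L \<longlongrightarrow> 0) (at_right 0) \<longleftrightarrow> ((\<lambda>a. c * ?A a) \<longlongrightarrow> 0) (at_right 0)"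
    by (rule tendsto_cong[OF ev])
  also have "\<dots> \<longleftrightarrow> (?A \<longlongrightarrow> 0) (at_right 0)"
  proof
    assume "((\<lambda>a. c * ?A a) \<longlongrightarrow> 0) (at_right 0)"
    from ennreal_tendsto_cmult[OF _ this, of "ennreal (fact (j - 1))"]
    have "((\<lambda>a. ennreal (fact (j - 1)) * (c * ?A a)) \<longlongrightarrow> 0) (at_right 0)" by simp
    moreover have "ennreal (fact (j - 1)) * c = 1" unfolding c_def
      by (subst ennreal_mult[symmetric]) auto
    ultimately show "(?A \<longlongrightarrow> 0) (at_right 0)" by (simp add: mult.assoc[symmetric])
  next
    assume "(?A \<longlongrightarrow> 0) (at_right 0)"
    from ennreal_tendsto_cmult[OF _ this, of c] show "((\<lambda>a. c * ?A a) \<longlongrightarrow> 0) (at_right 0)"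
      unfolding c_def by simp
  qed
  finally show ?thesis .
qed

lemma G0_inf: assumes inf: "GG J 0 1 = \<infinity>" and t: "0 < t" "t < 1" shows "GG J 0 t = \<infinity>"
proof -
  have "GG J 0 t + GG J t 1 = \<infinity>" using G_add[of 0 t 1] inf t by simp
  then show ?thesis using G_fin[OF t(1), of 1] by (auto simp: ennreal_add_eq_top)
qed

lemma assoc_inf:
  assumes j: "j \<ge> 1" and X: "ri_norm \<rho>" and inf: "GG J 0 1 = \<infinity>" and a: "0 < a" "a < 1"
  shows "assoc_norm \<rho> (\<lambda>t. indicator {0<..<a} t * ennreal (1 / J t) *
                  (\<integral>\<^sup>+ r\<in>{0<..<t}. ennreal (1 / J r) \<partial>lebesgue) ^ (j - 1)) = \<infinity>"
    (is "assoc_norm \<rho> ?ga = _")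
proof -
  define r1 where "r1 = enn2real (\<rho> (\<lambda>_. 1))"
  have r1e: "\<rho> (\<lambda>_. 1) = ennreal r1" unfolding r1_def using rho_one[OF X] by simp
  have r1p: "0 < r1" using r1e rho_one_pos[OF X] unfolding r1_def
    by (metis enn2real_nonneg ennreal_0 order_le_less)
  define g0 where "g0 = (\<lambda>_::real. ennreal (1 / r1))"
  have "\<rho> g0 = ennreal (1 / r1) * ennreal r1" unfolding g0_def
    using rho_const[OF X, of "1 / r1"] r1p r1e by simp
  also have "\<dots> = 1" using r1p by (subst ennreal_mult[symmetric]) auto
  finally have g0in: "g0 \<in> {g \<in> borel_measurable M01. \<rho> g \<le> 1}" unfolding g0_def by simp
  have "(\<integral>\<^sup>+ t. ?ga t * g0 t \<partial>M01) \<le> assoc_norm \<rho> ?ga"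
    unfolding assoc_norm_def using g0in by (rule SUP_upper)
  moreover have "(\<integral>\<^sup>+ t. ?ga t * g0 t \<partial>M01) = \<infinity>"
  proof -
    have eq: "(\<integral>\<^sup>+ t. ?ga t * g0 t \<partial>M01) = (\<integral>\<^sup>+ t. ?ga t * g0 t * indicator {0<..<1} t \<partial>lebesgue)"
      unfolding M01_def by (rule nn_integral_restrict_space) simp
    have pos: "0 < ennreal (1 / r1)" using r1p by simp
    show ?thesis
    proof (cases "j = 1")
      case True
      have "(\<integral>\<^sup>+ t. ennreal (1 / r1) * (hh J t * indicator {0<..<a} t) \<partial>lebesgue)
          \<le> (\<integral>\<^sup>+ t. ?ga t * g0 t * indicator {0<..<1} t \<partial>lebesgue)"
        using True a by (intro nn_integral_mono) (auto simp: hh_def g0_def indicator_def mult.commute)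
      moreover have "(\<integral>\<^sup>+ t. ennreal (1 / r1) * (hh J t * indicator {0<..<a} t) \<partial>lebesgue) = \<infinity>"
      proof -
        have mm: "(\<lambda>s. hh J s * indicator {0<..<a} s) \<in> borel_measurable lebesgue"
          by (intro borel_measurable_times_ennreal hh_meas borel_measurable_indicator) simp
        show ?thesis using nn_integral_cmult[OF mm, of "ennreal (1 / r1)"] G0_inf[OF inf a] pos
          by (simp add: G_int[symmetric] ennreal_mult_top)
      qed
      ultimately show ?thesis using eq by (simp add: top_unique)
    next
      case False
      then have j2: "j - 1 > 0" using j by simp
      have "(\<integral>\<^sup>+ t. \<infinity> * indicator {0<..<a} t \<partial>lebesgue)
          \<le> (\<integral>\<^sup>+ t. ?ga t * g0 t * indicator {0<..<1} t \<partial>lebesgue)"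
      proof (intro nn_integral_mono)
        fix t
        show "\<infinity> * indicator {0<..<a} t \<le> ?ga t * g0 t * indicator {0<..<1} t"
        proof (cases "t \<in> {0<..<a}")
          case True
          then have t: "0 < t" "t < 1" using a by auto
          have "(\<integral>\<^sup>+ r\<in>{0<..<t}. ennreal (1 / J r) \<partial>lebesgue) = \<infinity>"
            using G_stmt[of 0 t] G0_inf[OF inf t] t by simp
          moreover have "0 < ennreal (1 / J t)" using Jpos t by simp
          ultimately have "?ga t = \<infinity>" using True j2 by (simp add: ennreal_mult_top)
          then show ?thesis using True t pos by (simp add: g0_def ennreal_top_mult)
        qed simp
      qed
      moreover have "(\<integral>\<^sup>+ t. \<infinity> * indicator {0<..<a} t \<partial>lebesgue) = \<infinity>"
        using a by (subst nn_integral_cmult_indicator) (auto simp: ennreal_top_mult)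
      ultimately show ?thesis using eq by (simp add: top_unique)
    qed
  qed
  ultimately show ?thesis by (simp add: top_unique)
qed

lemma part_b2:
  assumes j: "j \<ge> 1" and X: "ri_norm \<rho>" and inf: "GG J 0 1 = \<infinity>"
  shows "\<not> ((\<lambda>a. SUP f \<in> {f \<in> borel_measurable M01. \<rho> (\<lambda>t. ennreal \<bar>f t\<bar>) \<le> 1}.
               Linf (Hop j J (\<lambda>t. indicator {0<..<a} t * f t))) \<longlongrightarrow> 0) (at_right 0)"
    (is "\<not> (?L \<longlongrightarrow> 0) _")
proof
  assume "(?L \<longlongrightarrow> 0) (at_right 0)"
  then have "eventually (\<lambda>a. ?L a < 1) (at_right 0)" unfolding order_tendsto_iff by simp
  then obtain b0 where b0: "0 < b0" "\<And>a. 0 < a \<Longrightarrow> a < b0 \<Longrightarrow> ?L a < 1"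
    unfolding eventually_at_right_field by auto
  define a where "a = min b0 1 / 2"
  have a: "0 < a" "a < b0" "a < 1" unfolding a_def using b0 by auto
  have "?L a = ennreal (1 / fact (j - 1)) * \<infinity>"
    using LHSb_eq[OF X a(1) a(3), of j] assoc_inf[OF j X inf a(1) a(3)] by simp
  also have "\<dots> = \<infinity>" by (simp add: ennreal_mult_top)
  finally have eq: "?L a = \<infinity>" .
  have h: "?L a < 1" using b0(2)[OF a(1) a(2)] .
  show False using h unfolding eq by simp
qed

end




theorem theorem7p5:
  fixes j :: nat and J :: "real \<Rightarrow> real" and \<rho> :: "(real \<Rightarrow> ennreal) \<Rightarrow> ennreal"
  assumes j: "j \<ge> 1"
    and Jmeas: "J \<in> borel_measurable (restrict_space lebesgue {0<..1})"
    and Jpos: "\<forall>t \<in> {0<..1}. J t > 0"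
    and Jinf: "(INF t \<in> {0<..1}. J t / t) > 0"
    and X: "ri_norm \<rho>"
  shows
    "((\<integral>\<^sup>+ r \<in> {0<..<1}. ennreal (1 / J r) \<partial>lebesgue) < \<infinity> \<longrightarrow>
        ((\<lambda>a. SUP f \<in> {f \<in> borel_measurable M01. Linf (\<lambda>t. ennreal \<bar>f t\<bar>) \<le> 1}.
               \<rho> (Hop j J (\<lambda>t. indicator {0<..<a} t * f t))) \<longlongrightarrow> 0) (at_right 0))
   \<and> ((\<integral>\<^sup>+ r \<in> {0<..<1}. ennreal (1 / J r) \<partial>lebesgue) = \<infinity> \<longrightarrow>
        (((\<lambda>a. SUP f \<in> {f \<in> borel_measurable M01. Linf (\<lambda>t. ennreal \<bar>f t\<bar>) \<le> 1}.
               \<rho> (Hop j J (\<lambda>t. indicator {0<..<a} t * f t))) \<longlongrightarrow> 0) (at_right 0)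
         \<longleftrightarrow>
         ((\<lambda>a. \<rho> (\<lambda>t. indicator {0<..<a} t *
                  (\<integral>\<^sup>+ r \<in> {t<..<1}. ennreal (1 / J r) \<partial>lebesgue) ^ j)) \<longlongrightarrow> 0) (at_right 0)))
   \<and> ((((\<lambda>a. SUP f \<in> {f \<in> borel_measurable M01. \<rho> (\<lambda>t. ennreal \<bar>f t\<bar>) \<le> 1}.
               Linf (Hop j J (\<lambda>t. indicator {0<..<a} t * f t))) \<longlongrightarrow> 0) (at_right 0))
        \<longleftrightarrow>
        ((\<lambda>a. assoc_norm \<rho> (\<lambda>t. indicator {0<..<a} t * ennreal (1 / J t) *
                  (\<integral>\<^sup>+ r \<in> {0<..<t}. ennreal (1 / J r) \<partial>lebesgue) ^ (j - 1))) \<longlongrightarrow> 0) (at_right 0))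
   \<and> ((\<integral>\<^sup>+ r \<in> {0<..<1}. ennreal (1 / J r) \<partial>lebesgue) = \<infinity> \<longrightarrow>
        \<not> ((\<lambda>a. SUP f \<in> {f \<in> borel_measurable M01. \<rho> (\<lambda>t. ennreal \<bar>f t\<bar>) \<le> 1}.
               Linf (Hop j J (\<lambda>t. indicator {0<..<a} t * f t))) \<longlongrightarrow> 0) (at_right 0))"
proof -
  have Gs: "(\<integral>\<^sup>+ r\<in>{0<..<1}. ennreal (1 / J r) \<partial>lebesgue) = GG J 0 1"
    by (rule G_stmt[OF Jmeas Jpos Jinf]) auto
  show ?thesis unfolding Gs
    using part_a1[OF Jmeas Jpos Jinf j X] part_a2[OF Jmeas Jpos Jinf j X]
      part_b1[OF Jmeas Jpos Jinf X, of j] part_b2[OF Jmeas Jpos Jinf j X]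
    by blast
qed

end
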